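(* Let $G$ be a distance-regular graph of diameter $d$ admitting a distance magic labeling $l$. If $D$ is a non-empty subset of $\{0,1,\dots,d\}$, then $l$ is either a $D$-magic labeling or an $(\alpha,\delta)$-$D$-antimagic labeling of $G$ for some $\alpha,\delta$. Moreover, if $G$ is bipartite, then $l$ is a $D$-magic labeling for every non-empty $D\subseteq\{1,3,5,\dots\}$.
   Context: A connected graph $G$ of diameter $d$ is distance-regular if there are non-negative integers $b_i,c_i$ ($0\le i\le d$) such that for any two vertices $x,y$ at distance $i$, $y$ has exactly $c_i$ neighbours at distance $i-1$ from $x$ and exactly $b_i$ neighbours at distance $i+1$ from $x$. $G_i(x)$ is the set of vertices at distance $i$ from $x$, and for a set of distances $D$, $N_D(x)=\bigcup_{i\in D}G_i(x)$. For $G$ of order $N$ and a bijection $f:V(G)\to\{1,\dots,N\}$, the weight of $x$ is $w(x)=\sum_{y\in N_D(x)}f(y)$. $f$ is $D$-magic if $w(x)$ is constant; it is $(\alpha,\delta)$-$D$-antimagic if the weights are pairwise distinct and the set $\{w(x):x\in V(G)\}$ is an arithmetic progression starting at $\alpha$ with common difference $\delta>0$. A distance magic labeling is a $\{1\}$-magic labeling. *)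

theory Defs
  imports Main
begin

definition simple_graph :: "'a set \<Rightarrow> ('a \<Rightarrow> 'a \<Rightarrow> bool) \<Rightarrow> bool" where
  "simple_graph V E \<longleftrightarrow> finite V \<and> V \<noteq> {} \<and>
     (\<forall>x y. E x y \<longrightarrow> x \<in> V \<and> y \<in> V) \<and>
     (\<forall>x y. E x y \<longrightarrow> E y x) \<and> (\<forall>x. \<not> E x x)"

definition walk :: "'a set \<Rightarrow> ('a \<Rightarrow> 'a \<Rightarrow> bool) \<Rightarrow> 'a list \<Rightarrow> bool" where
  "walk V E xs \<longleftrightarrow> xs \<noteq> [] \<and> set xs \<subseteq> V \<and>
     (\<forall>i. Suc i < length xs \<longrightarrow> E (xs ! i) (xs ! Suc i))"

definition connected_graph :: "'a set \<Rightarrow> ('a \<Rightarrow> 'a \<Rightarrow> bool) \<Rightarrow> bool" where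
  "connected_graph V E \<longleftrightarrow> simple_graph V E \<and>
     (\<forall>x\<in>V. \<forall>y\<in>V. \<exists>xs. walk V E xs \<and> hd xs = x \<and> last xs = y)"

definition gdist :: "'a set \<Rightarrow> ('a \<Rightarrow> 'a \<Rightarrow> bool) \<Rightarrow> 'a \<Rightarrow> 'a \<Rightarrow> nat" where
  "gdist V E x y = (LEAST n. \<exists>xs. walk V E xs \<and> hd xs = x \<and> last xs = y \<and> length xs = Suc n)"

definition diameter :: "'a set \<Rightarrow> ('a \<Rightarrow> 'a \<Rightarrow> bool) \<Rightarrow> nat" where
  "diameter V E = Max {gdist V E x y | x y. x \<in> V \<and> y \<in> V}"

definition distance_regular :: "'a set \<Rightarrow> ('a \<Rightarrow> 'a \<Rightarrow> bool) \<Rightarrow> nat \<Rightarrow> bool" where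
  "distance_regular V E d \<longleftrightarrow> connected_graph V E \<and> diameter V E = d \<and>
     (\<exists>b c :: nat \<Rightarrow> nat. \<forall>i\<le>d. \<forall>x\<in>V. \<forall>y\<in>V. gdist V E x y = i \<longrightarrow>
        card {z\<in>V. E y z \<and> gdist V E x z + 1 = i} = c i \<and>
        card {z\<in>V. E y z \<and> gdist V E x z = i + 1} = b i)"

definition bipartite :: "'a set \<Rightarrow> ('a \<Rightarrow> 'a \<Rightarrow> bool) \<Rightarrow> bool" where
  "bipartite V E \<longleftrightarrow> (\<exists>A\<subseteq>V. \<forall>x y. E x y \<longrightarrow> (x \<in> A \<longleftrightarrow> y \<notin> A))"

definition distN :: "'a set \<Rightarrow> ('a \<Rightarrow> 'a \<Rightarrow> bool) \<Rightarrow> nat set \<Rightarrow> 'a \<Rightarrow> 'a set" where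
  "distN V E D x = {y\<in>V. gdist V E x y \<in> D}"

definition lweight :: "'a set \<Rightarrow> ('a \<Rightarrow> 'a \<Rightarrow> bool) \<Rightarrow> nat set \<Rightarrow> ('a \<Rightarrow> nat) \<Rightarrow> 'a \<Rightarrow> nat" where
  "lweight V E D f x = (\<Sum>y\<in>distN V E D x. f y)"

definition labeling :: "'a set \<Rightarrow> ('a \<Rightarrow> nat) \<Rightarrow> bool" where
  "labeling V f \<longleftrightarrow> bij_betw f V {1..card V}"

definition D_magic :: "'a set \<Rightarrow> ('a \<Rightarrow> 'a \<Rightarrow> bool) \<Rightarrow> nat set \<Rightarrow> ('a \<Rightarrow> nat) \<Rightarrow> bool" where
  "D_magic V E D f \<longleftrightarrow> labeling V f \<and> (\<exists>k. \<forall>x\<in>V. lweight V E D f x = k)"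

definition D_antimagic :: "'a set \<Rightarrow> ('a \<Rightarrow> 'a \<Rightarrow> bool) \<Rightarrow> nat set \<Rightarrow> ('a \<Rightarrow> nat) \<Rightarrow> nat \<Rightarrow> nat \<Rightarrow> bool" where
  "D_antimagic V E D f \<alpha> \<delta> \<longleftrightarrow> labeling V f \<and> \<delta> > 0 \<and>
     inj_on (lweight V E D f) V \<and>
     lweight V E D f ` V = {\<alpha> + j * \<delta> | j. j < card V}"

definition distance_magic :: "'a set \<Rightarrow> ('a \<Rightarrow> 'a \<Rightarrow> bool) \<Rightarrow> ('a \<Rightarrow> nat) \<Rightarrow> bool" where
  "distance_magic V E f \<longleftrightarrow> D_magic V E {1} f"

end

theory Submission
  imports Defs Complex_Main
begin


lemma walk_single: "x \<in> V \<Longrightarrow> walk V E [x]"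
  by (simp add: walk_def)

lemma walk_snoc:
  assumes "simple_graph V E" "walk V E xs" "E (last xs) z"
  shows "walk V E (xs @ [z])"
proof -
  have z: "z \<in> V" using assms unfolding simple_graph_def by blast
  have ne: "xs \<noteq> []" using assms(2) walk_def by blast
  show ?thesis unfolding walk_def
  proof (intro conjI allI impI)
    show "xs @ [z] \<noteq> []" by simp
    show "set (xs @ [z]) \<subseteq> V" using z assms(2) unfolding walk_def by simp
  next
    fix i assume i: "Suc i < length (xs @ [z])"
    show "E ((xs @ [z]) ! i) ((xs @ [z]) ! Suc i)"
    proof (cases "Suc i < length xs")
      case True then show ?thesis using assms(2) unfolding walk_def by (simp add: nth_append)
    next
      case False
      then have "i = length xs - 1" using i by simp
      then show ?thesis using assms(3) ne by (simp add: nth_append last_conv_nth)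
    qed
  qed
qed

lemma walk_rev:
  assumes "simple_graph V E" "walk V E xs"
  shows "walk V E (rev xs)"
  unfolding walk_def
proof (intro conjI allI impI)
  show "rev xs \<noteq> []" "set (rev xs) \<subseteq> V" using assms(2) unfolding walk_def by auto
next
  fix i assume i: "Suc i < length (rev xs)"
  have "E (xs ! (length xs - Suc (Suc i))) (xs ! Suc (length xs - Suc (Suc i)))"
    using assms(2) i unfolding walk_def by auto
  moreover have "Suc (length xs - Suc (Suc i)) = length xs - Suc i" using i by simp
  ultimately have "E (xs ! (length xs - Suc (Suc i))) (xs ! (length xs - Suc i))" by simp
  then have "E (xs ! (length xs - Suc i)) (xs ! (length xs - Suc (Suc i)))"
    using assms(1) unfolding simple_graph_def by blast
  then show "E (rev xs ! i) (rev xs ! Suc i)" using i by (simp add: rev_nth)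
qed

lemma walk_take:
  assumes "walk V E xs" "0 < n"
  shows "walk V E (take n xs)"
  using assms unfolding walk_def by (auto dest: in_set_takeD)

lemma gdist_le:
  assumes "walk V E xs" "hd xs = x" "last xs = y"
  shows "gdist V E x y \<le> length xs - 1"
proof -
  have "length xs = Suc (length xs - 1)" using assms(1) unfolding walk_def by auto
  then show ?thesis unfolding gdist_def using assms by (intro Least_le) metis
qed

lemma walk_exists:
  assumes "connected_graph V E" "x \<in> V" "y \<in> V"
  shows "\<exists>xs. walk V E xs \<and> hd xs = x \<and> last xs = y \<and> length xs = Suc (gdist V E x y)"
proof -
  obtain xs where xs: "walk V E xs" "hd xs = x" "last xs = y"
    using assms unfolding connected_graph_def by blast
  have "length xs = Suc (length xs - 1)" using xs(1) unfolding walk_def by auto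
  then have "\<exists>n. \<exists>xs. walk V E xs \<and> hd xs = x \<and> last xs = y \<and> length xs = Suc n"
    using xs by blast
  then show ?thesis unfolding gdist_def by (rule LeastI_ex)
qed

lemma gd_refl: "x \<in> V \<Longrightarrow> gdist V E x x = 0"
  using gdist_le[of V E "[x]" x x] walk_single[of x V E] by simp

lemma gd_sym:
  assumes "connected_graph V E" "x \<in> V" "y \<in> V"
  shows "gdist V E x y = gdist V E y x"
proof -
  have sg: "simple_graph V E" using assms(1) connected_graph_def by blast
  have le: "gdist V E a b' \<le> gdist V E b' a" if ab: "a \<in> V" "b' \<in> V" for a b'
  proof -
    obtain xs where xs: "walk V E xs" "hd xs = b'" "last xs = a" "length xs = Suc (gdist V E b' a)"
      using walk_exists[OF assms(1) ab(2,1)] by blast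
    have "xs \<noteq> []" using xs walk_def by auto
    then have "hd (rev xs) = a" "last (rev xs) = b'" using xs by (auto simp: hd_rev last_rev)
    then show ?thesis using gdist_le[OF walk_rev[OF sg xs(1)]] xs(4) by simp
  qed
  show ?thesis using le assms(2,3) by (simp add: le_antisym)
qed

lemma gd_zero:
  assumes "connected_graph V E" "x \<in> V" "y \<in> V" "gdist V E x y = 0"
  shows "x = y"
proof -
  obtain xs where xs: "walk V E xs" "hd xs = x" "last xs = y" "length xs = Suc 0"
    using walk_exists[OF assms(1-3)] assms(4) by auto
  then obtain a where "xs = [a]" by (metis length_0_conv length_Suc_conv)
  then show ?thesis using xs by simp
qed

lemma gd_step:
  assumes "connected_graph V E" "x \<in> V" "y \<in> V" "E y z"
  shows "gdist V E x z \<le> gdist V E x y + 1"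
proof -
  have sg: "simple_graph V E" using assms(1) connected_graph_def by blast
  obtain xs where xs: "walk V E xs" "hd xs = x" "last xs = y" "length xs = Suc (gdist V E x y)"
    using walk_exists[OF assms(1-3)] by blast
  have w: "walk V E (xs @ [z])" using walk_snoc[OF sg xs(1)] xs(3) assms(4) by simp
  have "xs \<noteq> []" using xs walk_def by auto
  then show ?thesis using gdist_le[OF w] xs by simp
qed

lemma gd_adj:
  assumes "connected_graph V E" "x \<in> V" "E x z"
  shows "gdist V E x z = 1"
proof -
  have sg: "simple_graph V E" using assms(1) connected_graph_def by blast
  have z: "z \<in> V" "x \<noteq> z" using sg assms unfolding simple_graph_def by blast+
  have "gdist V E x z \<le> 1" using gd_step[OF assms(1,2,2,3)] gd_refl[OF assms(2)] by simp
  moreover have "gdist V E x z \<noteq> 0" using gd_zero[OF assms(1,2) z(1)] z(2) by blast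
  ultimately show ?thesis by simp
qed

lemma gd_pred:
  assumes "connected_graph V E" "x \<in> V" "y \<in> V" "gdist V E x y = Suc n"
  shows "\<exists>z\<in>V. E y z \<and> gdist V E x z = n"
proof -
  have sg: "simple_graph V E" using assms(1) connected_graph_def by blast
  obtain xs where xs: "walk V E xs" "hd xs = x" "last xs = y" "length xs = Suc (Suc n)"
    using walk_exists[OF assms(1-3)] assms(4) by auto
  define z where "z = xs ! n"
  have ne: "xs \<noteq> []" using xs by auto
  have zV: "z \<in> V" using xs unfolding walk_def z_def by (auto)
  have "E (xs ! n) (xs ! Suc n)" using xs unfolding walk_def by auto
  moreover have "xs ! Suc n = y" using xs(3,4) ne by (simp add: last_conv_nth)
  ultimately have Ezy: "E z y" using z_def by simp
  then have Eyz: "E y z" using sg unfolding simple_graph_def by blast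
  have wt: "walk V E (take (Suc n) xs)" using walk_take[OF xs(1)] by simp
  have "hd (take (Suc n) xs) = x" using xs ne by simp
  moreover have tne: "take (Suc n) xs \<noteq> []" using ne by simp
  have "length (take (Suc n) xs) = Suc n" using xs(4) by simp
  then have "last (take (Suc n) xs) = z" using z_def last_conv_nth[OF tne] by simp
  ultimately have "gdist V E x z \<le> n" using gdist_le[OF wt] xs(4) by simp
  moreover have "Suc n \<le> gdist V E x z + 1" using gd_step[OF assms(1,2) zV Ezy] assms(4) by simp
  ultimately show ?thesis using zV Eyz by (intro bexI[of _ z]) auto
qed

lemma gd_le_diam:
  assumes "connected_graph V E" "x \<in> V" "y \<in> V"
  shows "gdist V E x y \<le> diameter V E"
proof -
  have fin: "finite V" using assms(1) unfolding connected_graph_def simple_graph_def by blast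
  have "{gdist V E x y | x y. x \<in> V \<and> y \<in> V} = (\<lambda>(x,y). gdist V E x y) ` (V \<times> V)" by auto
  then have "finite {gdist V E x y | x y. x \<in> V \<and> y \<in> V}" using fin by simp
  then show ?thesis unfolding diameter_def using assms by (intro Max_ge) auto
qed

lemma walk_parity:
  assumes "walk V E xs" "\<forall>x y. E x y \<longrightarrow> (x \<in> A \<longleftrightarrow> y \<notin> A)"
  shows "i < length xs \<Longrightarrow> ((xs ! i \<in> A) = (xs ! 0 \<in> A)) = even i"
proof (induction i)
  case 0 then show ?case by simp
next
  case (Suc i)
  have e: "E (xs ! i) (xs ! Suc i)" using assms(1) Suc.prems unfolding walk_def by blast
  have ih: "((xs ! i \<in> A) = (xs ! 0 \<in> A)) = even i" using Suc.IH Suc.prems by simp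
  have "(xs ! Suc i \<in> A) = (xs ! i \<notin> A)" using assms(2) e by blast
  then show ?case using ih by auto
qed

lemma gd_bip:
  assumes "connected_graph V E" "bipartite V E" "x \<in> V" "y \<in> V" "E y z"
  shows "gdist V E x y \<noteq> gdist V E x z"
proof -
  have sg: "simple_graph V E" using assms(1) connected_graph_def by blast
  have zV: "z \<in> V" using sg assms(5) unfolding simple_graph_def by blast
  obtain A where A: "\<forall>x y. E x y \<longrightarrow> (x \<in> A \<longleftrightarrow> y \<notin> A)" using assms(2) unfolding bipartite_def by blast
  have par: "((w \<in> A) = (x \<in> A)) = even (gdist V E x w)" if w: "w \<in> V" for w
  proof -
    obtain xs where xs: "walk V E xs" "hd xs = x" "last xs = w" "length xs = Suc (gdist V E x w)"
      using walk_exists[OF assms(1,3) w] by blast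
    have ne: "xs \<noteq> []" using xs by auto
    have "xs ! gdist V E x w = w" using xs(3,4) last_conv_nth[OF ne] by simp
    moreover have "xs ! 0 = x" using xs(2) hd_conv_nth[OF ne] by simp
    ultimately show ?thesis using walk_parity[OF xs(1) A, of "gdist V E x w"] xs(4) by simp
  qed
  have "(y \<in> A) = (z \<notin> A)" using A assms(5) by blast
  then show ?thesis using par[OF assms(4)] par[OF zV] by auto
qed



lemma F_split: "(gy::real) * real (if (i::nat) + 1 = j then c j else if i = j + 1 then b j
     else if i = j then b 0 - b j - c j else (0::nat)) = real (c (i+1)) * (if j = i+1 then gy else 0)
     + (if i = 0 then 0 else real (b (i-1)) * (if j = i - 1 then gy else 0))
     + real (b 0 - b i - c i) * (if j = i then gy else 0)"
proof -
  consider "j = i + 1" | "i = j + 1" | "j = i" | "j \<noteq> i + 1 \<and> i \<noteq> j + 1 \<and> j \<noteq> i" by blast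
  then show ?thesis
  proof cases
    case 1
    then have "j \<noteq> i" "i \<noteq> j + 1" "i + 1 = j" "i = 0 \<or> j \<noteq> i - 1" by auto
    note facts = this
    have h: "i \<noteq> 0 \<Longrightarrow> j \<noteq> i - 1" using 1 by arith
    have B: "(if i = 0 then 0 else real (b (i-1)) * (if j = i - 1 then gy else 0)) = 0"
      proof (cases "i = 0")
      case False then have "j \<noteq> i - 1" using h by blast
      then show ?thesis using False by simp
    qed simp
    show ?thesis unfolding B using facts by (simp add: 1)
  next
    case 2
    then show ?thesis by simp
  next
    case 3
    then have "i \<noteq> j + 1" "i + 1 \<noteq> j" "i = 0 \<or> j \<noteq> i - 1" "j \<noteq> i + 1" by auto
    note facts = this
    have h: "i \<noteq> 0 \<Longrightarrow> j \<noteq> i - 1" using 3 by arith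
    have B: "(if i = 0 then 0 else real (b (i-1)) * (if j = i - 1 then gy else 0)) = 0"
      proof (cases "i = 0")
      case False then have "j \<noteq> i - 1" using h by blast
      then show ?thesis using False by simp
    qed simp
    show ?thesis unfolding B using facts by (simp add: 3)
  next
    case 4
    then have "i \<noteq> j + 1" "i + 1 \<noteq> j" "j \<noteq> i + 1" "j \<noteq> i" by auto
    note facts = this
    have h: "i \<noteq> 0 \<Longrightarrow> j \<noteq> i - 1" using 4 by arith
    have B: "(if i = 0 then 0 else real (b (i-1)) * (if j = i - 1 then gy else 0)) = 0"
      proof (cases "i = 0")
      case False then have "j \<noteq> i - 1" using h by blast
      then show ?thesis using False by simp
    qed simp
    show ?thesis unfolding B using facts by simp
  qed
qed

locale drg =
  fixes V :: "'a set" and E :: "'a \<Rightarrow> 'a \<Rightarrow> bool" and d :: nat and b c :: "nat \<Rightarrow> nat"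
  assumes conn: "connected_graph V E" and diam: "diameter V E = d"
    and reg: "\<forall>i\<le>d. \<forall>x\<in>V. \<forall>y\<in>V. gdist V E x y = i \<longrightarrow>
        card {z\<in>V. E y z \<and> gdist V E x z + 1 = i} = c i \<and>
        card {z\<in>V. E y z \<and> gdist V E x z = i + 1} = b i"
begin

abbreviation "gd \<equiv> gdist V E"

definition nb :: "'a \<Rightarrow> 'a set" where "nb x = {z\<in>V. E x z}"

definition Ai :: "nat \<Rightarrow> ('a \<Rightarrow> real) \<Rightarrow> 'a \<Rightarrow> real" where
  "Ai i g x = (\<Sum>y\<in>V. if gd x y = i then g y else 0)"

lemma sg: "simple_graph V E" using conn unfolding connected_graph_def by blast
lemma finV: "finite V" using sg unfolding simple_graph_def by blast
lemma Esym: "E x y \<Longrightarrow> E y x" using sg unfolding simple_graph_def by blast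
lemma EV: "E x y \<Longrightarrow> x \<in> V \<and> y \<in> V" using sg unfolding simple_graph_def by blast

lemma gd1: "x \<in> V \<Longrightarrow> y \<in> V \<Longrightarrow> gd x y = 1 \<longleftrightarrow> E x y"
proof
  assume xy: "x \<in> V" "y \<in> V" "gd x y = 1"
  then obtain z where "z \<in> V" "E y z" "gd x z = 0" using gd_pred[OF conn, of x y 0] by auto
  then show "E x y" using gd_zero[OF conn] xy Esym by blast
qed (use gd_adj[OF conn] in auto)

lemma nb_eq: "x \<in> V \<Longrightarrow> nb x = {y\<in>V. gd x y = 1}"
  unfolding nb_def using gd1 by auto

lemma deg: "x \<in> V \<Longrightarrow> card (nb x) = b 0"
proof -
  assume x: "x \<in> V"
  have "card {z\<in>V. E x z \<and> gd x z = 0 + 1} = b 0" using reg x gd_refl[of x V E] by auto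
  moreover have "{z\<in>V. E x z \<and> gd x z = 0 + 1} = nb x" unfolding nb_def using gd_adj[OF conn x] by auto
  ultimately show ?thesis by simp
qed

lemma cnt:
  assumes x: "x \<in> V" and y: "y \<in> V"
  shows "card {z\<in>V. E x z \<and> gd y z = i} =
    (if i + 1 = gd y x then c (gd y x) else if i = gd y x + 1 then b (gd y x)
     else if i = gd y x then b 0 - b (gd y x) - c (gd y x) else 0)"
proof -
  define j where "j = gd y x"
  have jd: "j \<le> d" using gd_le_diam[OF conn y x] diam j_def by simp
  define N1 where "N1 = {z\<in>V. E x z \<and> gd y z + 1 = j}"
  define N2 where "N2 = {z\<in>V. E x z \<and> gd y z = j}"
  define N3 where "N3 = {z\<in>V. E x z \<and> gd y z = j + 1}"
  have c1: "card N1 = c j" and c3: "card N3 = b j" using reg jd x y j_def N1_def N3_def by auto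
  have rng: "gd y z + 1 = j \<or> gd y z = j \<or> gd y z = j + 1" if "z \<in> V" "E x z" for z
  proof -
    have "gd y z \<le> j + 1" using gd_step[OF conn y x that(2)] j_def by simp
    moreover have "j \<le> gd y z + 1" using gd_step[OF conn y that(1) Esym[OF that(2)]] j_def by simp
    ultimately show ?thesis by linarith
  qed
  have un: "nb x = N1 \<union> N2 \<union> N3" unfolding nb_def N1_def N2_def N3_def using rng by auto
  have fins: "finite N1" "finite N2" "finite N3" unfolding N1_def N2_def N3_def using finV by auto
  have "card (nb x) = card N1 + card N2 + card N3"
    unfolding un using fins by (subst card_Un_disjoint, auto simp: N1_def N2_def N3_def card_Un_disjoint)+
  then have c2: "card N2 = b 0 - b j - c j" using deg[OF x] c1 c3 by simp
  show ?thesis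
  proof -
    consider "i + 1 = j" | "i = j + 1" | "i = j" | "i + 1 \<noteq> j \<and> i \<noteq> j + 1 \<and> i \<noteq> j" by blast
    then show ?thesis
    proof cases
      case 1
      then have "{z\<in>V. E x z \<and> gd y z = i} = N1" unfolding N1_def by auto
      then show ?thesis using 1 c1 j_def by simp
    next
      case 2
      then have "{z\<in>V. E x z \<and> gd y z = i} = N3" unfolding N3_def by auto
      then show ?thesis using 2 c3 j_def by simp
    next
      case 3
      then have "{z\<in>V. E x z \<and> gd y z = i} = N2" unfolding N2_def by auto
      then show ?thesis using 3 c2 j_def by simp
    next
      case 4
      have e: "{z\<in>V. E x z \<and> gd y z = i} = {}" using rng 4 by force
      show ?thesis unfolding e using 4 j_def by simp
    qed
  qed
qed

lemma sum_if_card: "finite A \<Longrightarrow> (\<Sum>z\<in>A. if P z then (k::real) else 0) = real (card {z\<in>A. P z}) * k"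
  by (simp add: sum.inter_filter[symmetric])

lemma recur:
  assumes x: "x \<in> V"
  shows "(\<Sum>z\<in>nb x. Ai i g z) = real (c (i+1)) * Ai (i+1) g x
     + (if i = 0 then 0 else real (b (i-1)) * Ai (i-1) g x)
     + real (b 0 - b i - c i) * Ai i g x"
proof -
  define F where "F j = (if i + 1 = j then c j else if i = j + 1 then b j
     else if i = j then b 0 - b j - c j else 0)" for j
  have "(\<Sum>z\<in>nb x. Ai i g z) = (\<Sum>z\<in>nb x. \<Sum>y\<in>V. if gd z y = i then g y else 0)"
    unfolding Ai_def ..
  also have "\<dots> = (\<Sum>y\<in>V. \<Sum>z\<in>nb x. if gd z y = i then g y else 0)" by (rule sum.swap)
  also have "\<dots> = (\<Sum>y\<in>V. g y * real (F (gd x y)))"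
  proof (rule sum.cong[OF refl])
    fix y assume y: "y \<in> V"
    have fn: "finite (nb x)" using finV nb_def by auto
    have "(\<Sum>z\<in>nb x. if gd z y = i then g y else 0) = real (card {z\<in>nb x. gd z y = i}) * g y"
      by (rule sum_if_card[OF fn])
    also have "{z\<in>nb x. gd z y = i} = {z\<in>V. E x z \<and> gd y z = i}"
      unfolding nb_def using gd_sym[OF conn _ y] by auto
    also have "card \<dots> = F (gd x y)" using cnt[OF x y] gd_sym[OF conn x y] F_def by simp
    finally show "(\<Sum>z\<in>nb x. if gd z y = i then g y else 0) = g y * real (F (gd x y))" by simp
  qed
  also have "\<dots> = (\<Sum>y\<in>V. real (c (i+1)) * (if gd x y = i+1 then g y else 0)
     + (if i = 0 then 0 else real (b (i-1)) * (if gd x y = i - 1 then g y else 0))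
     + real (b 0 - b i - c i) * (if gd x y = i then g y else 0))"
  proof (rule sum.cong[OF refl])
    fix y
    define j where "j = gd x y"
    show "g y * real (F (gd x y)) = real (c (i+1)) * (if gd x y = i+1 then g y else 0)
     + (if i = 0 then 0 else real (b (i-1)) * (if gd x y = i - 1 then g y else 0))
     + real (b 0 - b i - c i) * (if gd x y = i then g y else 0)"
      unfolding F_def by (rule F_split)
  qed
  also have "\<dots> = real (c (i+1)) * Ai (i+1) g x
     + (if i = 0 then 0 else real (b (i-1)) * Ai (i-1) g x)
     + real (b 0 - b i - c i) * Ai i g x"
  proof (cases "i = 0")
    case True
    then show ?thesis unfolding Ai_def by (simp add: sum.distrib sum_distrib_left)
  next
    case False
    then show ?thesis unfolding Ai_def by (simp add: sum.distrib sum_distrib_left)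
  qed
  finally show ?thesis .
qed


lemma Ai0: assumes x: "x \<in> V" shows "Ai 0 g x = g x"
proof -
  have "Ai 0 g x = (\<Sum>y\<in>V. if x = y then g y else 0)"
    unfolding Ai_def
  proof (rule sum.cong[OF refl])
    fix y assume y: "y \<in> V"
    have "gd x y = 0 \<longleftrightarrow> x = y" using gd_zero[OF conn x y] gd_refl[of x V E] x by auto
    then show "(if gd x y = 0 then g y else 0) = (if x = y then g y else 0)" by simp
  qed
  also have "\<dots> = g x" using finV x by simp
  finally show ?thesis .
qed

lemma Ai1: assumes x: "x \<in> V" shows "Ai 1 g x = (\<Sum>z\<in>nb x. g z)"
  unfolding Ai_def nb_eq[OF x] sum.inter_filter[OF finV] ..

lemma Ai_empty:
  assumes k: "0 < k" "c k = 0" and x: "x \<in> V"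
  shows "Ai k g x = 0"
proof -
  have "gd x y \<noteq> k" if y: "y \<in> V" for y
  proof
    assume e: "gd x y = k"
    obtain n where n: "k = Suc n" using k(1) by (cases k) auto
    have kd: "k \<le> d" using gd_le_diam[OF conn x y] diam e by simp
    have "card {z\<in>V. E y z \<and> gd x z + 1 = k} = c k" using reg kd x y e by blast
    moreover obtain z where z: "z \<in> V" "E y z" "gd x z = n" using gd_pred[OF conn x y] e n by blast
    then have "z \<in> {z\<in>V. E y z \<and> gd x z + 1 = k}" using n by simp
    then have "card {z\<in>V. E y z \<and> gd x z + 1 = k} \<noteq> 0" using finV by auto
    ultimately show False using k(2) by simp
  qed
  then show ?thesis unfolding Ai_def by simp
qed

lemma eigen:
  assumes lam: "\<forall>x\<in>V. (\<Sum>z\<in>nb x. g z) = lam * g x"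
  shows "\<exists>\<theta>. \<forall>x\<in>V. Ai i g x = \<theta> * g x"
proof -
  let ?P = "\<lambda>i. \<exists>\<theta>. \<forall>x\<in>V. Ai i g x = \<theta> * g x"
  have "?P i \<and> ?P (Suc i)" for i
  proof (induction i)
    case 0
    have "?P 0" using Ai0 by (intro exI[of _ 1]) simp
    moreover have "?P (Suc 0)" using Ai1 lam by (intro exI[of _ lam]) simp
    ultimately show ?case by simp
  next
    case (Suc i)
    obtain t0 where t0: "\<forall>x\<in>V. Ai i g x = t0 * g x" using Suc.IH by blast
    obtain t1 where t1: "\<forall>x\<in>V. Ai (Suc i) g x = t1 * g x" using Suc.IH by blast
    have "?P (Suc (Suc i))"
    proof (cases "c (Suc (Suc i)) = 0")
      case True
      then show ?thesis using Ai_empty[of "Suc (Suc i)"] by (intro exI[of _ 0]) simp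
    next
      case False
      define a where "a = real (b 0 - b (Suc i) - c (Suc i))"
      define cc where "cc = real (c (Suc (Suc i)))"
      have ccnz: "cc \<noteq> 0" using False cc_def by simp
      show ?thesis
      proof (intro exI[of _ "(t1 * lam - real (b i) * t0 - a * t1) / cc"] ballI)
        fix x assume x: "x \<in> V"
        have "(\<Sum>z\<in>nb x. Ai (Suc i) g z) = (\<Sum>z\<in>nb x. t1 * g z)"
          using t1 by (intro sum.cong) (auto simp: nb_def)
        also have "\<dots> = t1 * lam * g x" using lam x by (simp add: sum_distrib_left[symmetric])
        finally have "t1 * lam * g x = cc * Ai (Suc (Suc i)) g x + real (b i) * (t0 * g x) + a * (t1 * g x)"
          using recur[OF x, of "Suc i" g] t0 t1 x cc_def a_def by simp
        then show "Ai (Suc (Suc i)) g x = (t1 * lam - real (b i) * t0 - a * t1) / cc * g x"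
          using ccnz by (simp add: field_simps)
      qed
    qed
    then show ?case using Suc.IH by blast
  qed
  then show ?thesis by blast
qed

lemma bip_a:
  assumes bip: "bipartite V E" and x: "x \<in> V"
  shows "real (b 0 - b i - c i) * Ai i g x = 0"
proof (cases "\<exists>y\<in>V. gd x y = i")
  case True
  then obtain y where y: "y \<in> V" "gd x y = i" by blast
  have yx: "gd y x = i" using gd_sym[OF conn x y(1)] y by simp
  have E0: "{z\<in>V. E x z \<and> gd y z = i} = {}"
    using gd_bip[OF conn bip y(1) x] yx by blast
  have C: "card {z\<in>V. E x z \<and> gd y z = i} = b 0 - b i - c i" using cnt[OF x y(1), of i] yx by simp
  have "b 0 - b i - c i = 0" using C unfolding E0 by simp
  then show ?thesis by simp
next
  case False
  then show ?thesis unfolding Ai_def by auto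
qed

lemma bip_odd:
  assumes bip: "bipartite V E" and g0: "\<forall>x\<in>V. (\<Sum>z\<in>nb x. g z) = 0"
  shows "\<forall>x\<in>V. Ai (Suc (2 * k)) g x = 0"
proof (induction k)
  case 0
  then show ?case using Ai1 g0 by simp
next
  case (Suc k)
  obtain t where t: "\<forall>x\<in>V. Ai (Suc (Suc (2 * k))) g x = t * g x"
    using eigen[of g 0 "Suc (Suc (2 * k))"] g0 by auto
  show ?case
  proof
    fix x assume x: "x \<in> V"
    show "Ai (Suc (2 * Suc k)) g x = 0"
    proof (cases "c (Suc (2 * Suc k)) = 0")
      case True then show ?thesis using Ai_empty x by simp
    next
      case False
      have "(\<Sum>z\<in>nb x. Ai (Suc (Suc (2 * k))) g z) = (\<Sum>z\<in>nb x. t * g z)"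
        using t by (intro sum.cong) (auto simp: nb_def)
      also have "\<dots> = 0" using g0 x by (simp add: sum_distrib_left[symmetric])
      finally have S0: "(\<Sum>z\<in>nb x. Ai (Suc (Suc (2 * k))) g z) = 0" .
      have R: "(\<Sum>z\<in>nb x. Ai (Suc (Suc (2 * k))) g z) =
        real (c (Suc (Suc (2 * k)) + 1)) * Ai (Suc (Suc (2 * k)) + 1) g x
        + (if Suc (Suc (2 * k)) = 0 then 0 else real (b (Suc (Suc (2 * k)) - 1)) * Ai (Suc (Suc (2 * k)) - 1) g x)
        + real (b 0 - b (Suc (Suc (2 * k))) - c (Suc (Suc (2 * k)))) * Ai (Suc (Suc (2 * k))) g x"
        by (rule recur[OF x])
      have B0: "(if Suc (Suc (2 * k)) = 0 then 0 else real (b (Suc (Suc (2 * k)) - 1)) * Ai (Suc (Suc (2 * k)) - 1) g x) = 0"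
        using Suc.IH x by simp
      have A0: "real (b 0 - b (Suc (Suc (2 * k))) - c (Suc (Suc (2 * k)))) * Ai (Suc (Suc (2 * k))) g x = 0"
        by (rule bip_a[OF bip x])
      have "real (c (Suc (Suc (2 * k)) + 1)) * Ai (Suc (Suc (2 * k)) + 1) g x = 0"
        using R B0 A0 S0 by linarith
      then have "0 = real (c (Suc (2 * Suc k))) * Ai (Suc (2 * Suc k)) g x" by simp
      then show ?thesis using False by simp
    qed
  qed
qed

lemma sum_if_card': "finite A \<Longrightarrow> (\<Sum>z\<in>A. if P z then (k::real) else 0) = real (card {z\<in>A. P z}) * k"
  by (rule sum_if_card)

lemma sum_nb_total: "(\<Sum>x\<in>V. \<Sum>z\<in>nb x. g z) = real (b 0) * (\<Sum>z\<in>V. g z)"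
proof -
  have "(\<Sum>x\<in>V. \<Sum>z\<in>nb x. g z) = (\<Sum>x\<in>V. \<Sum>z\<in>V. if E x z then g z else 0)"
    unfolding nb_def using finV by (simp add: sum.inter_filter)
  also have "\<dots> = (\<Sum>z\<in>V. \<Sum>x\<in>V. if E x z then g z else 0)" by (rule sum.swap)
  also have "\<dots> = (\<Sum>z\<in>V. real (b 0) * g z)"
  proof (rule sum.cong[OF refl])
    fix z assume z: "z \<in> V"
    have "(\<Sum>x\<in>V. if E x z then g z else 0) = real (card {x\<in>V. E x z}) * g z"
      by (rule sum_if_card[OF finV])
    also have "{x\<in>V. E x z} = nb z" unfolding nb_def using Esym by auto
    finally show "(\<Sum>x\<in>V. if E x z then g z else 0) = real (b 0) * g z" using deg[OF z] by simp
  qed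
  finally show ?thesis by (simp add: sum_distrib_left)
qed

lemma Ai_lin: "Ai i (\<lambda>y. f y + k * h y) x = Ai i f x + k * Ai i h x"
proof -
  have "Ai i (\<lambda>y. f y + k * h y) x = (\<Sum>y\<in>V. (if gd x y = i then f y else 0) + k * (if gd x y = i then h y else 0))"
    unfolding Ai_def by (rule sum.cong) auto
  then show ?thesis unfolding Ai_def by (simp add: sum.distrib sum_distrib_left)
qed

lemma lw_decomp:
  assumes x: "x \<in> V"
  shows "real (lweight V E D l x) = (\<Sum>i\<in>D \<inter> {..d}. Ai i (\<lambda>y. real (l y)) x)"
proof -
  have fD: "finite (D \<inter> {..d})" by simp
  have "(\<Sum>i\<in>D \<inter> {..d}. Ai i (\<lambda>y. real (l y)) x)
      = (\<Sum>i\<in>D \<inter> {..d}. \<Sum>y\<in>V. if gd x y = i then real (l y) else 0)" unfolding Ai_def ..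
  also have "\<dots> = (\<Sum>y\<in>V. \<Sum>i\<in>D \<inter> {..d}. if gd x y = i then real (l y) else 0)" by (rule sum.swap)
  also have "\<dots> = (\<Sum>y\<in>V. if gd x y \<in> D then real (l y) else 0)"
  proof (rule sum.cong[OF refl])
    fix y assume y: "y \<in> V"
    have "gd x y \<le> d" using gd_le_diam[OF conn x y] diam by simp
    then show "(\<Sum>i\<in>D \<inter> {..d}. if gd x y = i then real (l y) else 0) = (if gd x y \<in> D then real (l y) else 0)"
      using sum.delta'[OF fD, of "gd x y" "\<lambda>_. real (l y)"] by simp
  qed
  also have "\<dots> = (\<Sum>y\<in>distN V E D x. real (l y))"
    unfolding distN_def using finV by (simp add: sum.inter_filter)
  finally show ?thesis unfolding lweight_def by simp
qed


lemma v_eig: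
  assumes lab: "bij_betw l V {1..card V}" and K: "\<forall>x\<in>V. (\<Sum>z\<in>nb x. real (l z)) = K"
  shows "\<forall>x\<in>V. (\<Sum>z\<in>nb x. real (l z) - (real (card V) + 1) / 2) = 0"
proof -
  define N where "N = card V"
  define cc where "cc = (real N + 1) / 2"
  have Vne: "V \<noteq> {}" using sg unfolding simple_graph_def by blast
  have Npos: "0 < N" unfolding N_def using finV Vne by (simp add: card_gt_0_iff)
  have each: "(\<Sum>z\<in>nb x. real (l z) - cc) = K - real (b 0) * cc" if x: "x \<in> V" for x
  proof -
    have "(\<Sum>z\<in>nb x. real (l z) - cc) = (\<Sum>z\<in>nb x. real (l z)) - (\<Sum>z\<in>nb x. cc)"
      by (rule sum_subtractf)
    also have "(\<Sum>z\<in>nb x. cc) = real (b 0) * cc" using deg[OF x] by simp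
    also have "(\<Sum>z\<in>nb x. real (l z)) = K" using K x by blast
    finally show ?thesis .
  qed
  have "(\<Sum>z\<in>V. real (l z)) = (\<Sum>j\<in>{1..card V}. real j)"
    by (rule sum.reindex_bij_betw[OF lab])
  also have "\<dots> = real N * (real N + 1) / 2"
    using double_gauss_sum_from_Suc_0[of N, where 'a = real] unfolding N_def by simp
  finally have sl: "(\<Sum>z\<in>V. real (l z)) = real N * (real N + 1) / 2" .
  have "(\<Sum>z\<in>V. real (l z) - cc) = (\<Sum>z\<in>V. real (l z)) - (\<Sum>z\<in>V. cc)"
    by (rule sum_subtractf)
  also have "(\<Sum>z\<in>V. cc) = real N * cc" unfolding N_def by simp
  finally have s0: "(\<Sum>z\<in>V. real (l z) - cc) = 0" unfolding sl cc_def by simp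
  have "(\<Sum>x\<in>V. \<Sum>z\<in>nb x. real (l z) - cc) = (\<Sum>x\<in>V. K - real (b 0) * cc)"
    using each by (rule sum.cong[OF refl])
  also have "\<dots> = real N * (K - real (b 0) * cc)" unfolding N_def by simp
  finally have "real N * (K - real (b 0) * cc) = 0"
    using sum_nb_total[of "\<lambda>z. real (l z) - cc"] s0 by simp
  then have "K - real (b 0) * cc = 0" using Npos by simp
  then show ?thesis using each unfolding N_def cc_def by simp
qed

end

lemma bij_minus1: "bij_betw (\<lambda>j. j - 1) {1..(N::nat)} {..<N}"
  unfolding bij_betw_def
proof
  show "inj_on (\<lambda>j. j - 1) {1..N}" by (rule inj_onI) auto
  show "(\<lambda>j. j - 1) ` {1..N} = {..<N}"
  proof
    show "(\<lambda>j. j - 1) ` {1..N} \<subseteq> {..<N}" by auto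
    show "{..<N} \<subseteq> (\<lambda>j. j - 1) ` {1..N}"
    proof
      fix y assume "y \<in> {..<N}"
      then have "Suc y \<in> {1..N}" "y = Suc y - 1" by auto
      then show "y \<in> (\<lambda>j. j - 1) ` {1..N}" by blast
    qed
  qed
qed

lemma bij_Nminus: "bij_betw (\<lambda>j. N - j) {1..(N::nat)} {..<N}"
  unfolding bij_betw_def
proof
  show "inj_on (\<lambda>j. N - j) {1..N}" by (rule inj_onI) auto
  show "(\<lambda>j. N - j) ` {1..N} = {..<N}"
  proof
    show "(\<lambda>j. N - j) ` {1..N} \<subseteq> {..<N}" by auto
    show "{..<N} \<subseteq> (\<lambda>j. N - j) ` {1..N}"
    proof
      fix y assume "y \<in> {..<N}"
      then have "N - y \<in> {1..N}" "y = N - (N - y)" by auto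
      then show "y \<in> (\<lambda>j. N - j) ` {1..N}" by blast
    qed
  qed
qed

lemma ap:
  assumes l: "bij_betw l V {1..N}" and s: "bij_betw \<sigma> {1..N} {..<(N::nat)}" and dl: "0 < (\<delta>::nat)"
    and f: "\<forall>x\<in>V. f x = \<alpha> + \<sigma> (l x) * \<delta>"
  shows "inj_on f V \<and> f ` V = {\<alpha> + j * \<delta> | j. j < N}"
proof -
  have sl: "bij_betw (\<sigma> \<circ> l) V {..<N}" using bij_betw_trans[OF l s] .
  have "inj_on f V"
  proof (rule inj_onI)
    fix x y assume xy: "x \<in> V" "y \<in> V" "f x = f y"
    have fx: "f x = \<alpha> + \<sigma> (l x) * \<delta>" using f xy(1) by blast
    have fy: "f y = \<alpha> + \<sigma> (l y) * \<delta>" using f xy(2) by blast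
    have "\<sigma> (l x) * \<delta> = \<sigma> (l y) * \<delta>" using xy(3) unfolding fx fy by simp
    then have "(\<sigma> \<circ> l) x = (\<sigma> \<circ> l) y" using dl by simp
    then show "x = y" using sl xy(1,2) unfolding bij_betw_def inj_on_def by blast
  qed
  moreover have "f ` V = (\<lambda>x. \<alpha> + \<sigma> (l x) * \<delta>) ` V"
    by (rule image_cong[OF refl]) (use f in blast)
  moreover have "(\<lambda>x. \<alpha> + \<sigma> (l x) * \<delta>) ` V = (\<lambda>j. \<alpha> + j * \<delta>) ` ((\<sigma> \<circ> l) ` V)"
    by (simp add: image_comp o_def)
  moreover have "(\<sigma> \<circ> l) ` V = {..<N}" using sl unfolding bij_betw_def by blast
  moreover have "(\<lambda>j. \<alpha> + j * \<delta>) ` {..<N} = {\<alpha> + j * \<delta> | j. j < N}" by blast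
  ultimately show ?thesis by simp
qed

lemma magicI:
  assumes "labeling V l" "V \<noteq> {}" "\<forall>x\<in>V. real (lweight V E D l x) = C"
  shows "D_magic V E D l"
proof -
  obtain x0 where x0: "x0 \<in> V" using assms(2) by blast
  have "\<forall>x\<in>V. lweight V E D l x = lweight V E D l x0"
    using assms(3) x0 by (metis of_nat_eq_iff)
  then show ?thesis unfolding D_magic_def using assms(1) by blast
qed



theorem theorem2p6:
  fixes V :: "'a set" and E :: "'a \<Rightarrow> 'a \<Rightarrow> bool" and d :: nat and l :: "'a \<Rightarrow> nat"
  assumes "distance_regular V E d"
    and "distance_magic V E l"
  shows "(\<forall>D. D \<noteq> {} \<and> D \<subseteq> {0..d} \<longrightarrow>
            D_magic V E D l \<or> (\<exists>\<alpha> \<delta>. D_antimagic V E D l \<alpha> \<delta>))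
       \<and> (bipartite V E \<longrightarrow>
            (\<forall>D. D \<noteq> {} \<and> D \<subseteq> {i. odd i} \<longrightarrow> D_magic V E D l))"
proof -
  obtain b c where reg: "\<forall>i\<le>d. \<forall>x\<in>V. \<forall>y\<in>V. gdist V E x y = i \<longrightarrow>
        card {z\<in>V. E y z \<and> gdist V E x z + 1 = i} = c i \<and>
        card {z\<in>V. E y z \<and> gdist V E x z = i + 1} = b i"
    and conn: "connected_graph V E" and diam: "diameter V E = d"
    using assms(1) unfolding distance_regular_def by blast
  interpret G: drg V E d b c unfolding drg_def using conn diam reg by blast
  have lab: "labeling V l" using assms(2) unfolding distance_magic_def D_magic_def by blast
  obtain k where k: "\<forall>x\<in>V. lweight V E {1} l x = k"
    using assms(2) unfolding distance_magic_def D_magic_def by blast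
  have labb: "bij_betw l V {1..card V}" using lab unfolding labeling_def .
  have Vne: "V \<noteq> {}" using G.sg unfolding simple_graph_def by blast
  have nbK: "\<forall>x\<in>V. (\<Sum>z\<in>G.nb x. real (l z)) = real k"
  proof
    fix x assume x: "x \<in> V"
    have dn: "distN V E {1} x = G.nb x" unfolding distN_def G.nb_eq[OF x] by simp
    have "real k = real (lweight V E {1} l x)" using k x by simp
    also have "\<dots> = (\<Sum>z\<in>G.nb x. real (l z))" unfolding lweight_def dn by simp
    finally show "(\<Sum>z\<in>G.nb x. real (l z)) = real k" by simp
  qed
  define cc where "cc = (real (card V) + 1) / 2"
  define v where "v y = real (l y) - cc" for y
  have v0: "\<forall>x\<in>V. (\<Sum>z\<in>G.nb x. v z) = 0" using G.v_eig[OF labb nbK] unfolding v_def cc_def by simp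
  have v0': "\<forall>x\<in>V. (\<Sum>z\<in>G.nb x. v z) = 0 * v x" using v0 by simp
  have o1: "\<forall>x\<in>V. (\<Sum>z\<in>G.nb x. (\<lambda>_. 1::real) z) = real (b 0) * (\<lambda>_. 1) x" using G.deg by simp
  have "\<forall>i. \<exists>t. \<forall>x\<in>V. G.Ai i v x = t * v x" using G.eigen[OF v0'] by blast
  from choice[OF this] obtain tv where tv: "\<forall>i. \<forall>x\<in>V. G.Ai i v x = tv i * v x" by blast
  have "\<forall>i. \<exists>t. \<forall>x\<in>V. G.Ai i (\<lambda>_. 1) x = t * 1" using G.eigen[OF o1] by simp
  from choice[OF this] obtain t1 where t1: "\<forall>i. \<forall>x\<in>V. G.Ai i (\<lambda>_. 1) x = t1 i * 1" by blast
  have lv: "(\<lambda>y. real (l y)) = (\<lambda>y. v y + cc * 1)" unfolding v_def by simp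
  have key: "real (lweight V E D l x) = (\<Sum>i\<in>D \<inter> {..d}. G.Ai i v x + cc * G.Ai i (\<lambda>_. 1) x)"
    if x: "x \<in> V" for D x
    unfolding G.lw_decomp[OF x] lv G.Ai_lin ..
  have P1: "D_magic V E D l \<or> (\<exists>\<alpha> \<delta>. D_antimagic V E D l \<alpha> \<delta>)" for D
  proof -
    define \<Theta> where "\<Theta> = (\<Sum>i\<in>D \<inter> {..d}. tv i)"
    define C where "C = (\<Sum>i\<in>D \<inter> {..d}. cc * t1 i)"
    have W: "real (lweight V E D l x) = \<Theta> * (real (l x) - cc) + C" if x: "x \<in> V" for x
    proof -
      have "real (lweight V E D l x) = (\<Sum>i\<in>D \<inter> {..d}. tv i * v x + cc * t1 i)"
        unfolding key[OF x] using tv t1 x by simp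
      also have "\<dots> = \<Theta> * v x + C" unfolding \<Theta>_def C_def by (simp add: sum.distrib sum_distrib_right)
      finally show ?thesis unfolding v_def .
    qed
    consider "card V < 2" | "\<Theta> = 0" | "2 \<le> card V" "\<Theta> \<noteq> 0" by linarith
    then show ?thesis
    proof cases
      case 1
      have "card V = 1" using 1 Vne G.finV by (simp add: card_gt_0_iff less_2_cases_iff)
      then obtain x0 where V0: "V = {x0}" by (rule card_1_singletonE)
      have "\<forall>x\<in>V. real (lweight V E D l x) = real (lweight V E D l x0)" using V0 by simp
      then show ?thesis using magicI[OF lab Vne] by blast
    next
      case 2
      then have "\<forall>x\<in>V. real (lweight V E D l x) = C" using W by simp
      then show ?thesis using magicI[OF lab Vne] by blast
    next
      case 3
      define N where "N = card V"
      have im: "l ` V = {1..N}" using labb unfolding N_def bij_betw_def by blast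
      have "1 \<in> l ` V" "2 \<in> l ` V" "N \<in> l ` V" using 3 unfolding im N_def by auto
      then obtain x1 x2 xN where xs: "x1 \<in> V" "l x1 = 1" "x2 \<in> V" "l x2 = 2" "xN \<in> V" "l xN = N"
        by (metis imageE)
      define w where "w = lweight V E D l"
      have Wd: "real (w x2) - real (w x1) = \<Theta>" unfolding w_def using W[OF xs(1)] W[OF xs(3)] xs(2,4)
        by (simp add: algebra_simps)
      define t where "t = int (w x2) - int (w x1)"
      have Tt: "\<Theta> = of_int t" unfolding t_def using Wd by simp
      have lx: "1 \<le> l x \<and> l x \<le> N" if "x \<in> V" for x using im that by auto
      consider "0 < t" | "t < 0" using 3 Tt by fastforce
      then show ?thesis
      proof cases
        case 1
        define \<delta> where "\<delta> = nat t"
        have dpos: "0 < \<delta>" using 1 \<delta>_def by simp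
        have rd: "real \<delta> = \<Theta>" using 1 Tt \<delta>_def by simp
        have fx: "\<forall>x\<in>V. w x = w x1 + (l x - 1) * \<delta>"
        proof
          fix x assume x: "x \<in> V"
          have "real (w x) = real (w x1) + (real (l x) - 1) * \<Theta>"
            using W[OF x] W[OF xs(1)] xs(2) unfolding w_def by (simp add: algebra_simps)
          also have "\<dots> = real (w x1 + (l x - 1) * \<delta>)"
            using lx[OF x] rd by (simp add: of_nat_diff)
          finally show "w x = w x1 + (l x - 1) * \<delta>" by (rule of_nat_eq_iff[THEN iffD1])
        qed
        have "inj_on w V \<and> w ` V = {w x1 + j * \<delta> | j. j < N}"
          by (rule ap[OF labb[folded N_def] bij_minus1 dpos fx])
        then have "D_antimagic V E D l (w x1) \<delta>"
          unfolding D_antimagic_def w_def N_def using lab dpos by blast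
        then show ?thesis by blast
      next
        case 2
        define \<delta> where "\<delta> = nat (- t)"
        have dpos: "0 < \<delta>" using 2 \<delta>_def by simp
        have rd: "real \<delta> = - \<Theta>" using 2 Tt \<delta>_def by simp
        have fx: "\<forall>x\<in>V. w x = w xN + (N - l x) * \<delta>"
        proof
          fix x assume x: "x \<in> V"
          have "real (w x) = real (w xN) + (real N - real (l x)) * (- \<Theta>)"
            using W[OF x] W[OF xs(5)] xs(6) unfolding w_def by (simp add: algebra_simps)
          also have "\<dots> = real (w xN + (N - l x) * \<delta>)"
            using lx[OF x] rd by (simp add: of_nat_diff)
          finally show "w x = w xN + (N - l x) * \<delta>" by (rule of_nat_eq_iff[THEN iffD1])
        qed
        have "inj_on w V \<and> w ` V = {w xN + j * \<delta> | j. j < N}"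
          by (rule ap[OF labb[folded N_def] bij_Nminus dpos fx])
        then have "D_antimagic V E D l (w xN) \<delta>"
          unfolding D_antimagic_def w_def N_def using lab dpos by blast
        then show ?thesis by blast
      qed
    qed
  qed
  have P2: "D_magic V E D l" if bip: "bipartite V E" and D: "D \<subseteq> {i. odd i}" for D
  proof -
    have z: "G.Ai i v x = 0" if i: "i \<in> D \<inter> {..d}" and x: "x \<in> V" for i x
    proof -
      have "odd i" using i D by blast
      then obtain m where "i = Suc (2 * m)" using oddE by (metis Suc_eq_plus1)
      then show ?thesis using G.bip_odd[OF bip v0, of m] x by simp
    qed
    have "\<forall>x\<in>V. real (lweight V E D l x) = (\<Sum>i\<in>D \<inter> {..d}. cc * t1 i)"
    proof
      fix x assume x: "x \<in> V"
      show "real (lweight V E D l x) = (\<Sum>i\<in>D \<inter> {..d}. cc * t1 i)"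
        unfolding key[OF x] using z[OF _ x] t1 x by (intro sum.cong) auto
    qed
    then show ?thesis using magicI[OF lab Vne] by blast
  qed
  show ?thesis using P1 P2 by blast
qed

end
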